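(* Let $s:\mathcal{X}\times\mathcal{Y}\to\mathbb{R}$ be measurable, $S_1,\dots,S_d$ probability distributions on $\mathcal{X}\times\mathcal{Y}$, $f$ a function as described in the context, and $\rho>0$. Let $F_1,\dots,F_d$ be the c.d.f.'s of $s\#S_1,\dots,s\#S_d$ and let $F_{\min}(x)\coloneqq\min_{1\le i\le d}F_i(x)$ (which is a c.d.f.). Define $g_{f,\rho}:[0,1]\to[0,1]$ by $$g_{f,\rho}(\beta)\coloneqq\inf\left\{z\in[0,1] : \beta f\left(\tfrac{z}{\beta}\right)+(1-\beta)f\left(\tfrac{1-z}{1-\beta}\right)\le\rho\right\}$$ and $g_{f,\rho}^{-1}(\tau)\coloneqq\sup\{\beta\in[0,1] : g_{f,\rho}(\beta)\le\tau\}$. Let $$\mathcal{P}_{f,\rho}\coloneqq\{S \text{ a distribution on }\mathbb{R} : \exists S_0\in\mathcal{CH}(s\#S_1,\dots,s\#S_d)\text{ with } D_f(S\Vert S_0)\le\rho\}$$ and $\widetilde{\mathcal{Q}}(\alpha;\mathcal{P}_{f,\rho})\coloneqq\sup_{P\in\mathcal{P}_{f,\rho}}\mathcal{Q}(\alpha;P)$. Then for all $\alpha\in(0,1)$, $$\widetilde{\mathcal{Q}}(\alpha;\mathcal{P}_{f,\rho})=\mathcal{Q}\left(g_{f,\rho}^{-1}(\alpha);F_{\min}\right).$$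
   Context: $f:\mathbb{R}\to\mathbb{R}\cup\{+\infty\}$ is a closed convex function with $f(1)=0$ and $f(t)=+\infty$ for $t<0$. For probability distributions $P\ll Q$, $D_f(P\Vert Q)\coloneqq\int f\left(\frac{dP}{dQ}\right)dQ$. $\mathcal{CH}(P_1,\dots,P_d)\coloneqq\{\sum_{i=1}^d\lambda_iP_i:\lambda_i\ge0,\sum_i\lambda_i=1\}$. $s\#T$ is the push-forward $(s\#T)(A)=T(s^{-1}(A))$. Quantiles: for a distribution $P$ on $\mathbb{R}$, $\mathcal{Q}(\beta;P)\coloneqq\inf\{q : P(S\le q)\ge\beta\}$; for a c.d.f. $F$, $\mathcal{Q}(\beta;F)\coloneqq\inf\{q : F(q)\ge\beta\}$. *)

theory Defs
  imports "HOL-Probability.Probability"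
begin

definition closed_convex_ext :: "(real \<Rightarrow> ereal) \<Rightarrow> bool" where
  "closed_convex_ext f \<longleftrightarrow>
     (\<forall>x. f x \<noteq> -\<infinity>) \<and>
     (\<forall>x y t. 0 \<le> t \<and> t \<le> 1 \<longrightarrow>
        f (t * x + (1 - t) * y) \<le> ereal t * f x + ereal (1 - t) * f y) \<and>
     closed {(x, r). f x \<le> ereal r}"

definition fdiv :: "(real \<Rightarrow> ereal) \<Rightarrow> 'a measure \<Rightarrow> 'a measure \<Rightarrow> ereal" where
  "fdiv f P Q =
     enn2ereal (\<integral>\<^sup>+ x. e2ennreal (f (enn2real (RN_deriv Q P x))) \<partial>Q)
   - enn2ereal (\<integral>\<^sup>+ x. e2ennreal (- f (enn2real (RN_deriv Q P x))) \<partial>Q)"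

definition mixture :: "nat \<Rightarrow> (nat \<Rightarrow> real) \<Rightarrow> (nat \<Rightarrow> real measure) \<Rightarrow> real measure" where
  "mixture d lam P = measure_of UNIV (sets borel)
     (\<lambda>A. \<Sum>i<d. ennreal (lam i) * emeasure (P i) A)"

definition conv_hull_meas :: "nat \<Rightarrow> (nat \<Rightarrow> real measure) \<Rightarrow> real measure set" where
  "conv_hull_meas d P = {mixture d lam P | lam. (\<forall>i<d. 0 \<le> lam i) \<and> (\<Sum>i<d. lam i) = 1}"

text \<open>Quantile of a c.d.f. (extended-real valued: +infinity if the set is empty).\<close>
definition quantile_cdf :: "(real \<Rightarrow> real) \<Rightarrow> real \<Rightarrow> ereal" where
  "quantile_cdf F \<beta> = Inf (ereal ` {q. F q \<ge> \<beta>})"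

definition quantile :: "real measure \<Rightarrow> real \<Rightarrow> ereal" where
  "quantile P \<beta> = quantile_cdf (\<lambda>q. measure P {..q}) \<beta>"

definition g_fun :: "(real \<Rightarrow> ereal) \<Rightarrow> real \<Rightarrow> real \<Rightarrow> real" where
  "g_fun f \<rho> \<beta> = Inf {z \<in> {0..1}.
      ereal \<beta> * f (z / \<beta>) + ereal (1 - \<beta>) * f ((1 - z) / (1 - \<beta>)) \<le> ereal \<rho>}"

definition g_inv :: "(real \<Rightarrow> ereal) \<Rightarrow> real \<Rightarrow> real \<Rightarrow> real" where
  "g_inv f \<rho> \<tau> = Sup {\<beta> \<in> {0<..<1}. g_fun f \<rho> \<beta> \<le> \<tau>}"

definition P_ball :: "(real \<Rightarrow> ereal) \<Rightarrow> real \<Rightarrow> nat \<Rightarrow> (nat \<Rightarrow> real measure) \<Rightarrow> real measure set" where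
  "P_ball f \<rho> d P = {S. prob_space S \<and> sets S = sets borel \<and>
     (\<exists>S0 \<in> conv_hull_meas d P. absolutely_continuous S0 S \<and> fdiv f S S0 \<le> ereal \<rho>)}"

end

theory Submission
  imports Defs
begin


definition phi :: "(real \<Rightarrow> ereal) \<Rightarrow> real \<Rightarrow> real \<Rightarrow> ereal" where
  "phi f \<beta> z = ereal \<beta> * f (z / \<beta>) + ereal (1 - \<beta>) * f ((1 - z) / (1 - \<beta>))"

lemma cce_conv:
  assumes "closed_convex_ext f" "0 \<le> t" "t \<le> 1" "f x = ereal a" "f y = ereal b"
  shows "f (t * x + (1 - t) * y) \<le> ereal (t * a + (1 - t) * b)"
proof -
  have "f (t * x + (1 - t) * y) \<le> ereal t * f x + ereal (1 - t) * f y"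
    using assms(1-3) unfolding closed_convex_ext_def by blast
  also have "\<dots> = ereal (t * a + (1 - t) * b)" using assms(4,5) by simp
  finally show ?thesis .
qed

lemma cce_not_minf: "closed_convex_ext f \<Longrightarrow> f x \<noteq> -\<infinity>"
  unfolding closed_convex_ext_def by blast

lemma phi_fin:
  assumes "closed_convex_ext f" "phi f \<beta> z \<le> ereal \<rho>" "0 < \<beta>" "\<beta> < 1"
  obtains u v where "f (z / \<beta>) = ereal u" "f ((1 - z) / (1 - \<beta>)) = ereal v"
    "\<beta> * u + (1 - \<beta>) * v \<le> \<rho>"
proof -
  have n1: "f (z / \<beta>) \<noteq> -\<infinity>" "f ((1 - z) / (1 - \<beta>)) \<noteq> -\<infinity>"
    using cce_not_minf[OF assms(1)] by auto
  have "f (z / \<beta>) \<noteq> \<infinity>"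
  proof
    assume "f (z / \<beta>) = \<infinity>"
    then have "phi f \<beta> z = \<infinity>" using n1 assms(3,4) unfolding phi_def
      by (cases "f ((1 - z) / (1 - \<beta>))") auto
    then show False using assms(2) by simp
  qed
  moreover have "f ((1 - z) / (1 - \<beta>)) \<noteq> \<infinity>"
  proof
    assume "f ((1 - z) / (1 - \<beta>)) = \<infinity>"
    then have "phi f \<beta> z = \<infinity>" using n1 assms(3,4) unfolding phi_def
      by (cases "f (z / \<beta>)") auto
    then show False using assms(2) by simp
  qed
  ultimately obtain u v where uv: "f (z / \<beta>) = ereal u" "f ((1 - z) / (1 - \<beta>)) = ereal v"
    using n1 by (metis ereal_cases)
  moreover have "\<beta> * u + (1 - \<beta>) * v \<le> \<rho>" using assms(2) uv unfolding phi_def by simp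
  ultimately show ?thesis using that by blast
qed

lemma phi_diag: "f 1 = 0 \<Longrightarrow> 0 < \<beta> \<Longrightarrow> \<beta> < 1 \<Longrightarrow> phi f \<beta> \<beta> = 0"
  unfolding phi_def by (simp add: zero_ereal_def)

lemma aux_comb: "(B::real) \<noteq> 0 \<Longrightarrow> C \<noteq> 0 \<Longrightarrow>
   (t * C / B) * (w / C) + (1 - t * C / B) * 1 = t * w / B + (B - t * C) / B"
  by (simp add: field_simps)

lemma phi_comb:
  assumes cce: "closed_convex_ext f" and f1: "f 1 = 0" and ph: "phi f \<beta> z \<le> ereal \<rho>"
    and b: "0 < \<beta>" "\<beta> < 1" and c: "0 < c" "c < 1" and t: "0 \<le> t" "t \<le> 1" and r: "0 \<le> \<rho>"
  shows "phi f (t * \<beta> + (1 - t) * c) (t * z + (1 - t) * c) \<le> ereal \<rho>"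
proof -
  obtain u v where uv: "f (z / \<beta>) = ereal u" "f ((1 - z) / (1 - \<beta>)) = ereal v"
    and le: "\<beta> * u + (1 - \<beta>) * v \<le> \<rho>"
    using phi_fin[OF cce ph b] by blast
  define b' where "b' = t * \<beta> + (1 - t) * c"
  define z' where "z' = t * z + (1 - t) * c"
  have b'pos: "0 < b'" unfolding b'_def using b c t
    by (smt (verit) mult_nonneg_nonneg mult_pos_pos)
  have b'lt: "b' < 1"
  proof (cases "t = 0")
    case True then show ?thesis using c by (simp add: b'_def)
  next
    case False
    then have "t * \<beta> < t * 1" using t b by (intro mult_strict_left_mono) auto
    moreover have "(1 - t) * c \<le> (1 - t) * 1" using t c by (intro mult_left_mono) auto
    ultimately show ?thesis unfolding b'_def by simp
  qed
  define \<mu> where "\<mu> = t * \<beta> / b'"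
  define \<nu> where "\<nu> = t * (1 - \<beta>) / (1 - b')"
  have q1: "0 \<le> (1 - t) * c" "0 \<le> (1 - t) * (1 - c)" using t c by auto
  have mu: "0 \<le> \<mu>" "\<mu> \<le> 1" unfolding \<mu>_def using b'pos b t q1
    by (auto simp: b'_def)
  have nu0: "0 \<le> \<nu>" unfolding \<nu>_def using b'lt b t by auto
  have nu: "0 \<le> \<nu>" "\<nu> \<le> 1" using nu0 apply simp
    unfolding \<nu>_def using b'lt b t q1
    by (auto simp: b'_def algebra_simps)
  have d1: "b' - t * \<beta> = (1 - t) * c" by (simp add: b'_def)
  have d2: "(1 - b') - t * (1 - \<beta>) = (1 - t) * (1 - c)" by (simp add: b'_def algebra_simps)
  have e1: "z' / b' = \<mu> * (z / \<beta>) + (1 - \<mu>) * 1"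
  proof -
    have "\<mu> * (z / \<beta>) + (1 - \<mu>) * 1 = t * z / b' + (b' - t * \<beta>) / b'"
      unfolding \<mu>_def using b'pos b by (simp add: field_simps)
    also have "\<dots> = z' / b'" unfolding d1 z'_def by (simp add: add_divide_distrib)
    finally show ?thesis by simp
  qed
  have e2: "(1 - z') / (1 - b') = \<nu> * ((1 - z) / (1 - \<beta>)) + (1 - \<nu>) * 1"
  proof -
    have "\<nu> * ((1 - z) / (1 - \<beta>)) + (1 - \<nu>) * 1 = t * (1 - z) / (1 - b') + ((1 - b') - t * (1 - \<beta>)) / (1 - b')"
      unfolding \<nu>_def using b'lt b by (intro aux_comb) auto
    also have "\<dots> = (1 - z') / (1 - b')" unfolding d2 z'_def add_divide_distrib[symmetric] by (simp add: algebra_simps)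
    finally show ?thesis by simp
  qed
  have f1': "f 1 = ereal 0" using f1 by (simp add: zero_ereal_def)
  have i1: "f (z' / b') \<le> ereal (\<mu> * u)"
    using cce_conv[OF cce mu uv(1) f1'] e1 by simp
  have i2: "f ((1 - z') / (1 - b')) \<le> ereal (\<nu> * v)"
    using cce_conv[OF cce nu uv(2) f1'] e2 by simp
  have "phi f b' z' \<le> ereal b' * ereal (\<mu> * u) + ereal (1 - b') * ereal (\<nu> * v)"
    unfolding phi_def using i1 i2 b'pos b'lt
    by (intro add_mono ereal_mult_left_mono) auto
  also have "\<dots> = ereal (t * (\<beta> * u + (1 - \<beta>) * v))"
    unfolding \<mu>_def \<nu>_def using b'pos b'lt by (simp add: field_simps)
  also have "\<dots> \<le> ereal \<rho>"
  proof -
    have "t * (\<beta> * u + (1 - \<beta>) * v) \<le> \<rho>"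
    proof (cases "\<beta> * u + (1 - \<beta>) * v \<ge> 0")
      case True
      then have "t * (\<beta> * u + (1 - \<beta>) * v) \<le> 1 * (\<beta> * u + (1 - \<beta>) * v)"
        using t by (intro mult_right_mono) auto
      then show ?thesis using le by simp
    next
      case False
      then have "t * (\<beta> * u + (1 - \<beta>) * v) \<le> 0" using t
        by (simp add: mult_nonneg_nonpos)
      then show ?thesis using r by simp
    qed
    then show ?thesis by simp
  qed
  finally show ?thesis unfolding b'_def z'_def .
qed


lemma g_fun_phi: "g_fun f \<rho> \<beta> = Inf {z \<in> {0..1}. phi f \<beta> z \<le> ereal \<rho>}"
  unfolding g_fun_def phi_def ..

lemma g_le: "z \<in> {0..1} \<Longrightarrow> phi f \<beta> z \<le> ereal \<rho> \<Longrightarrow> g_fun f \<rho> \<beta> \<le> z"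
  unfolding g_fun_phi by (rule cInf_lower) (auto intro: bdd_belowI[of _ 0])

lemma g_lessD:
  assumes "f 1 = 0" "0 < \<beta>" "\<beta> < 1" "0 \<le> \<rho>" "g_fun f \<rho> \<beta> < c"
  shows "\<exists>z \<in> {0..1}. phi f \<beta> z \<le> ereal \<rho> \<and> z < c"
proof -
  have "\<beta> \<in> {z \<in> {0..1}. phi f \<beta> z \<le> ereal \<rho>}"
    using assms phi_diag[of f \<beta>] by (auto simp: zero_ereal_def)
  then have ne: "{z \<in> {0..1}. phi f \<beta> z \<le> ereal \<rho>} \<noteq> {}" by blast
  from cInf_lessD[OF ne assms(5)[unfolded g_fun_phi]] show ?thesis by auto
qed

lemma g_self: "f 1 = 0 \<Longrightarrow> 0 < \<beta> \<Longrightarrow> \<beta> < 1 \<Longrightarrow> 0 \<le> \<rho> \<Longrightarrow> g_fun f \<rho> \<beta> \<le> \<beta>"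
  by (rule g_le) (auto simp: phi_diag zero_ereal_def)

lemma g_inv_facts:
  assumes "f 1 = 0" "0 < \<alpha>" "\<alpha> < 1" "0 \<le> \<rho>"
  shows "\<alpha> \<le> g_inv f \<rho> \<alpha>" "g_inv f \<rho> \<alpha> \<le> 1"
    "\<And>\<beta>. g_inv f \<rho> \<alpha> < \<beta> \<Longrightarrow> \<beta> < 1 \<Longrightarrow> \<alpha> < g_fun f \<rho> \<beta>"
    "\<And>b. b < g_inv f \<rho> \<alpha> \<Longrightarrow> \<exists>\<beta>'. b < \<beta>' \<and> 0 < \<beta>' \<and> \<beta>' < 1 \<and> g_fun f \<rho> \<beta>' \<le> \<alpha>"
proof -
  let ?B = "{\<beta> \<in> {0<..<1}. g_fun f \<rho> \<beta> \<le> \<alpha>}"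
  have aB: "\<alpha> \<in> ?B" using assms g_self[of f \<alpha> \<rho>] by auto
  have bdd: "bdd_above ?B" by (auto intro: bdd_aboveI[of _ 1])
  show "\<alpha> \<le> g_inv f \<rho> \<alpha>" unfolding g_inv_def by (rule cSup_upper[OF aB bdd])
  show "g_inv f \<rho> \<alpha> \<le> 1" unfolding g_inv_def using aB by (intro cSup_least) auto
  show "\<alpha> < g_fun f \<rho> \<beta>" if "g_inv f \<rho> \<alpha> < \<beta>" "\<beta> < 1" for \<beta>
  proof (rule ccontr)
    assume "\<not> \<alpha> < g_fun f \<rho> \<beta>"
    moreover have "0 < \<beta>" using that(1) \<open>\<alpha> \<le> g_inv f \<rho> \<alpha>\<close> assms by linarith
    ultimately have "\<beta> \<in> ?B" using that by auto
    then have "\<beta> \<le> g_inv f \<rho> \<alpha>" unfolding g_inv_def by (rule cSup_upper[OF _ bdd])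
    then show False using that by simp
  qed
  show "\<exists>\<beta>'. b < \<beta>' \<and> 0 < \<beta>' \<and> \<beta>' < 1 \<and> g_fun f \<rho> \<beta>' \<le> \<alpha>" if "b < g_inv f \<rho> \<alpha>" for b
  proof -
    have ne: "?B \<noteq> {}" using aB by blast
    from less_cSupD[OF ne that[unfolded g_inv_def]] show ?thesis by auto
  qed
qed

lemma key_le:
  assumes cce: "closed_convex_ext f" and f1: "f 1 = 0" and a: "0 < \<alpha>" "\<alpha> < 1" and r: "0 \<le> \<rho>"
    and b: "g_inv f \<rho> \<alpha> \<le> \<beta>" "\<beta> < 1" and z: "0 \<le> z" "z \<le> 1"
    and ph: "phi f \<beta> z \<le> ereal \<rho>"
  shows "\<alpha> \<le> z"
proof (rule ccontr)
  assume "\<not> \<alpha> \<le> z"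
  then have za: "z < \<alpha>" by simp
  note gi = g_inv_facts[of f \<alpha> \<rho>, OF f1 a r]
  have bpos: "0 < \<beta>" using gi(1) b a by linarith
  define c where "c = (1 + \<beta>) / 2"
  define t where "t = 1 - (\<alpha> - z) / 2"
  have c: "0 < c" "c < 1" "\<beta> < c" using bpos b unfolding c_def by auto
  have t: "0 \<le> t" "t < 1" using za z a unfolding t_def by auto
  have ph': "phi f (t * \<beta> + (1 - t) * c) (t * z + (1 - t) * c) \<le> ereal \<rho>"
    using phi_comb[OF cce f1 ph bpos b(2) c(1,2) t(1) _ r] t by simp
  have "t * \<beta> + (1 - t) * c > t * \<beta> + (1 - t) * \<beta>"
    using t c by (intro add_strict_left_mono mult_strict_left_mono) auto
  then have gt: "g_inv f \<rho> \<alpha> < t * \<beta> + (1 - t) * c" using b by (simp add: algebra_simps)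
  have "t * \<beta> + (1 - t) * c < t * 1 + (1 - t) * 1"
    using t c b by (intro add_le_less_mono mult_left_mono mult_strict_left_mono) auto
  then have lt1: "t * \<beta> + (1 - t) * c < 1" by simp
  have z'0: "0 \<le> t * z + (1 - t) * c" using t z c by auto
  have "t * z + (1 - t) * c \<le> t * 1 + (1 - t) * 1"
    using t c z by (intro add_mono mult_left_mono) auto
  then have z'1: "t * z + (1 - t) * c \<le> 1" by simp
  have "(1 - t) * (c - z) \<le> (1 - t) * 1" using t c z by (intro mult_left_mono) auto
  also have "\<dots> < \<alpha> - z" using za unfolding t_def by simp
  finally have z'a: "t * z + (1 - t) * c < \<alpha>" by (simp add: algebra_simps)
  have "g_fun f \<rho> (t * \<beta> + (1 - t) * c) \<le> t * z + (1 - t) * c"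
    using g_le[OF _ ph'] z'0 z'1 by auto
  then show False using gi(3)[OF gt lt1] z'a by simp
qed

lemma key_ge:
  assumes cce: "closed_convex_ext f" and f1: "f 1 = 0" and a: "0 < \<alpha>" "\<alpha> < 1" and r: "0 \<le> \<rho>"
    and b: "0 < b" "b < g_inv f \<rho> \<alpha>"
  shows "\<exists>z. 0 \<le> z \<and> z \<le> 1 \<and> z < \<alpha> \<and> phi f b z \<le> ereal \<rho>"
proof -
  note gi = g_inv_facts[of f \<alpha> \<rho>, OF f1 a r]
  obtain \<beta>' where \<beta>': "b < \<beta>'" "0 < \<beta>'" "\<beta>' < 1" "g_fun f \<rho> \<beta>' \<le> \<alpha>"
    using gi(4)[OF b(2)] by blast
  define c where "c = min b \<alpha> / 2"
  have c: "0 < c" "c < b" "c < \<alpha>" "c < 1" using b a unfolding c_def by auto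
  define t where "t = (b - c) / (\<beta>' - c)"
  have t: "0 < t" "t < 1" using c \<beta>' unfolding t_def by auto
  have bt: "b = t * \<beta>' + (1 - t) * c"
  proof -
    have "t * (\<beta>' - c) = b - c" unfolding t_def using c \<beta>' by simp
    then show ?thesis by (simp add: algebra_simps)
  qed
  define \<theta> where "\<theta> = \<alpha> + (1 - t) * (\<alpha> - c) / t"
  have "0 < (1 - t) * (\<alpha> - c) / t" using t c by auto
  then have "g_fun f \<rho> \<beta>' < \<theta>" using \<beta>'(4) unfolding \<theta>_def by simp
  then obtain z' where z': "0 \<le> z'" "z' \<le> 1" "phi f \<beta>' z' \<le> ereal \<rho>" "z' < \<theta>"
    using g_lessD[of f \<beta>' \<rho> \<theta>, OF f1 \<beta>'(2,3) r] by force
  define z where "z = t * z' + (1 - t) * c"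
  have ph: "phi f b z \<le> ereal \<rho>" unfolding bt z_def
    by (rule phi_comb[OF cce f1 z'(3) \<beta>'(2,3) c(1,4)]) (use t r in auto)
  have "t * z' < t * \<theta>" using t z' by simp
  also have "t * \<theta> = t * \<alpha> + (1 - t) * (\<alpha> - c)" unfolding \<theta>_def using t by (simp add: field_simps)
  finally have za: "z < \<alpha>" unfolding z_def by (simp add: algebra_simps)
  have z0: "0 \<le> z" unfolding z_def using t z' c by auto
  have "z \<le> t * 1 + (1 - t) * 1" unfolding z_def
    using t c z' by (intro add_mono mult_left_mono) auto
  then show ?thesis using za z0 ph by auto
qed




lemma mixture_facts:
  assumes sP: "\<And>i. i < d \<Longrightarrow> sets (P i) = sets borel"
  shows "sets (mixture d lam P) = sets borel" "space (mixture d lam P) = UNIV"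
    "\<And>A. A \<in> sets borel \<Longrightarrow> emeasure (mixture d lam P) A = (\<Sum>i<d. ennreal (lam i) * emeasure (P i) A)"
proof -
  show "sets (mixture d lam P) = sets borel" unfolding mixture_def
    by (metis sets_measure_of_conv sets.sigma_sets_eq space_borel sets.space_closed)
  show "space (mixture d lam P) = UNIV" unfolding mixture_def
    by (simp add: space_measure_of_conv)
  fix A :: "real set" assume A: "A \<in> sets borel"
  have sa: "sigma_algebra UNIV (sets borel :: real set set)"
    by (metis sets.sigma_algebra_axioms space_borel)
  have pos: "positive (sets borel) (\<lambda>A. \<Sum>i<d. ennreal (lam i) * emeasure (P i) A)"
    unfolding positive_def by simp
  have ca: "countably_additive (sets borel) (\<lambda>A. \<Sum>i<d. ennreal (lam i) * emeasure (P i) A)"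
    unfolding countably_additive_def
  proof (intro allI impI)
    fix F :: "nat \<Rightarrow> real set"
    assume F: "range F \<subseteq> sets borel" "disjoint_family F" "\<Union> (range F) \<in> sets borel"
    have "(\<Sum>n. \<Sum>i<d. ennreal (lam i) * emeasure (P i) (F n))
        = (\<Sum>i<d. \<Sum>n. ennreal (lam i) * emeasure (P i) (F n))"
      by (rule suminf_sum) (rule summableI)
    also have "\<dots> = (\<Sum>i<d. ennreal (lam i) * emeasure (P i) (\<Union> (range F)))"
    proof (rule sum.cong[OF refl])
      fix i assume "i \<in> {..<d}"
      then have "range F \<subseteq> sets (P i)" using sP F(1) by auto
      then show "(\<Sum>n. ennreal (lam i) * emeasure (P i) (F n)) = ennreal (lam i) * emeasure (P i) (\<Union> (range F))"
        using suminf_emeasure[OF _ F(2), of "P i"] by simp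
    qed
    finally show "(\<Sum>n. \<Sum>i<d. ennreal (lam i) * emeasure (P i) (F n))
        = (\<Sum>i<d. ennreal (lam i) * emeasure (P i) (\<Union> (range F)))" .
  qed
  show "emeasure (mixture d lam P) A = (\<Sum>i<d. ennreal (lam i) * emeasure (P i) A)"
    unfolding mixture_def by (rule emeasure_measure_of_sigma[OF sa pos ca A])
qed




lemma conv_pt: fixes s t t0 :: real assumes "s < t"
  shows "(t - t0) / (t - s) * s + (1 - (t - t0) / (t - s)) * t = t0"
proof -
  define D where "D = t - s"
  have D: "D > 0" "t = s + D" using assms unfolding D_def by auto
  have "(t - t0) / D * s + (1 - (t - t0) / D) * t = ((t - t0) * s + (D - (t - t0)) * t) / D"
    using D by (simp add: field_simps)
  also have "(t - t0) * s + (D - (t - t0)) * t = t0 * D" using D(2) by (simp add: algebra_simps)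
  finally show ?thesis using D unfolding D_def by simp
qed
lemma frac_le_cross: fixes X Y P Q :: real
  shows "0 < P \<Longrightarrow> 0 < Q \<Longrightarrow> X * Q \<le> Y * P \<Longrightarrow> X / P \<le> Y / Q"
  by (simp add: field_simps)

lemma three_slope:
  assumes cce: "closed_convex_ext f" and st: "s < t0" "t0 < t"
    and fs: "f s = ereal a" and ft0: "f t0 = ereal c" and ft: "f t = ereal b"
  shows "(c - a) / (t0 - s) \<le> (b - c) / (t - t0)"
proof -
  define l where "l = (t - t0) / (t - s)"
  have l: "0 \<le> l" "l \<le> 1" unfolding l_def using st by auto
  have e: "l * s + (1 - l) * t = t0" unfolding l_def using st
    by (intro conv_pt) simp
  have "f t0 \<le> ereal (l * a + (1 - l) * b)"
    using cce_conv[OF cce l fs ft] e by simp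
  then have c1: "c \<le> l * a + (1 - l) * b" using ft0 by simp
  define D where "D = t - s"
  have D: "D > 0" "t = s + D" using st unfolding D_def by auto
  have "l * a + (1 - l) * b = ((t - t0) * a + (D - (t - t0)) * b) / D"
    unfolding l_def D_def[symmetric] using D by (simp add: field_simps)
  then have "c * D \<le> (t - t0) * a + (D - (t - t0)) * b" using c1 D by (simp add: le_divide_eq)
  then have "(c - a) * (t - t0) \<le> (b - c) * (t0 - s)" using D(2) by (simp add: algebra_simps)
  then show ?thesis using st by (intro frac_le_cross) auto
qed

lemma subgradient:
  assumes cce: "closed_convex_ext f" and t: "t1 < t0" "t0 < t2" "f t1 \<noteq> \<infinity>" "f t2 \<noteq> \<infinity>"
  shows "\<exists>c a. f t0 = ereal c \<and> (\<forall>t. ereal (c + a * (t - t0)) \<le> f t)"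
proof -
  have nm: "\<And>x. f x \<noteq> -\<infinity>" using cce_not_minf[OF cce] .
  define fr where "fr x = real_of_ereal (f x)" for x
  have fr: "f x = ereal (fr x)" if "f x \<noteq> \<infinity>" for x
    using that nm[of x] unfolding fr_def by (cases "f x") auto
  define l where "l = (t2 - t0) / (t2 - t1)"
  have l: "0 \<le> l" "l \<le> 1" unfolding l_def using t by auto
  have e: "l * t1 + (1 - l) * t2 = t0" unfolding l_def using t
    by (intro conv_pt) simp
  have "f t0 \<le> ereal (l * fr t1 + (1 - l) * fr t2)"
    using cce_conv[OF cce l fr[OF t(3)] fr[OF t(4)]] e by simp
  then have ft0: "f t0 \<noteq> \<infinity>" by auto
  define c where "c = fr t0"
  have fc: "f t0 = ereal c" using fr[OF ft0] c_def by simp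
  define SL where "SL = {(c - fr s) / (t0 - s) | s. s < t0 \<and> f s \<noteq> \<infinity>}"
  have ne: "SL \<noteq> {}" unfolding SL_def using t by blast
  have slope: "(c - fr s) / (t0 - s) \<le> (fr u - c) / (u - t0)"
    if "s < t0" "f s \<noteq> \<infinity>" "t0 < u" "f u \<noteq> \<infinity>" for s u
    using three_slope[OF cce that(1) that(3) fr[OF that(2)] fc fr[OF that(4)]] .
  have bdd: "bdd_above SL" unfolding SL_def
    by (rule bdd_aboveI[of _ "(fr t2 - c) / (t2 - t0)"]) (use slope t in auto)
  define a where "a = Sup SL"
  have "ereal (c + a * (x - t0)) \<le> f x" for x
  proof (cases "f x = \<infinity>")
    case True then show ?thesis by simp
  next
    case False
    note fx = fr[OF False]
    consider "x < t0" | "x = t0" | "t0 < x" by linarith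
    then show ?thesis
    proof cases
      case 1
      have "(c - fr x) / (t0 - x) \<in> SL" unfolding SL_def using 1 False by blast
      then have "(c - fr x) / (t0 - x) \<le> a" unfolding a_def by (rule cSup_upper[OF _ bdd])
      then have "c - fr x \<le> a * (t0 - x)" using 1 by (simp add: field_simps)
      then have "c + a * (x - t0) \<le> fr x" by (simp add: algebra_simps)
      then show ?thesis using fx by simp
    next
      case 2 then show ?thesis using fc by simp
    next
      case 3
      have "a \<le> (fr x - c) / (x - t0)" unfolding a_def
        by (rule cSup_least[OF ne]) (use slope 3 False in \<open>auto simp: SL_def\<close>)
      then have "a * (x - t0) \<le> fr x - c" using 3 by (simp add: field_simps)
      then show ?thesis using fx by simp
    qed
  qed
  then show ?thesis using fc by blast
qed

lemma lower_bound_int: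
  fixes l :: "'a \<Rightarrow> real" and k :: "'a \<Rightarrow> ereal"
  assumes l: "integrable M l" and le: "AE x in M. ereal (l x) \<le> k x"
  shows "ereal (integral\<^sup>L M l) \<le> enn2ereal (\<integral>\<^sup>+ x. e2ennreal (k x) \<partial>M) - enn2ereal (\<integral>\<^sup>+ x. e2ennreal (- k x) \<partial>M)"
proof -
  obtain r q where rq: "0 \<le> r" "0 \<le> q" "(\<integral>\<^sup>+x. ennreal (l x)\<partial>M) = ennreal r"
    "(\<integral>\<^sup>+x. ennreal (- l x)\<partial>M) = ennreal q" "integral\<^sup>L M l = r - q"
    using integrableE[OF l] by metis
  have p: "ennreal r \<le> (\<integral>\<^sup>+ x. e2ennreal (k x) \<partial>M)"
    unfolding rq(3)[symmetric]
    by (rule nn_integral_mono_AE) (use le in \<open>auto elim!: eventually_mono intro: e2ennreal_mono[of "ereal _", simplified]\<close>)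
  have n: "(\<integral>\<^sup>+ x. e2ennreal (- k x) \<partial>M) \<le> ennreal q"
    unfolding rq(4)[symmetric]
  proof (rule nn_integral_mono_AE)
    show "AE x in M. e2ennreal (- k x) \<le> ennreal (- l x)"
      using le
    proof (rule eventually_mono)
      fix x assume "ereal (l x) \<le> k x"
      then have "- k x \<le> ereal (- l x)" by (metis ereal_minus_le_minus ereal_uminus_uminus uminus_ereal.simps(1))
      then show "e2ennreal (- k x) \<le> ennreal (- l x)" using e2ennreal_mono by fastforce
    qed
  qed
  have "ereal (integral\<^sup>L M l) = enn2ereal (ennreal r) - enn2ereal (ennreal q)"
    using rq by simp
  also have "\<dots> \<le> enn2ereal (\<integral>\<^sup>+ x. e2ennreal (k x) \<partial>M) - enn2ereal (\<integral>\<^sup>+ x. e2ennreal (- k x) \<partial>M)"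
    by (rule ereal_minus_mono) (use p n in \<open>auto simp: less_eq_ennreal.rep_eq\<close>)
  finally show ?thesis .
qed




lemma null_of_inf:
  assumes fin: "(\<integral>\<^sup>+x. e2ennreal (k x) \<partial>Q) < \<infinity>" and N: "N \<in> sets Q"
    and inf: "\<And>x. x \<in> N \<Longrightarrow> k x = \<infinity>"
  shows "emeasure Q N = 0"
proof (rule ccontr)
  assume ne: "emeasure Q N \<noteq> 0"
  have "(\<integral>\<^sup>+x. \<infinity> * indicator N x \<partial>Q) \<le> (\<integral>\<^sup>+x. e2ennreal (k x) \<partial>Q)"
    by (rule nn_integral_mono) (auto simp: indicator_def inf)
  moreover have "(\<integral>\<^sup>+x. \<infinity> * indicator N x \<partial>Q) = \<infinity> * emeasure Q N"
    using N by (rule nn_integral_cmult_indicator)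
  moreover have "\<infinity> * emeasure Q N = \<infinity>" using ne by (simp add: ennreal_mult_eq_top_iff)
  ultimately show False using fin by (simp add: top_unique)
qed

lemma degenerate_case:
  assumes cce: "closed_convex_ext f" and Q: "prob_space Q" and B: "B \<in> sets Q"
    and b: "measure Q B > 0" and hm: "h \<in> borel_measurable Q" and hi: "integrable Q h"
    and w: "(\<integral>x. h x * indicator B x \<partial>Q) = w"
    and fin: "(\<integral>\<^sup>+x. e2ennreal (f (h x)) \<partial>Q) < \<infinity>"
    and \<sigma>: "\<sigma> = 1 \<or> \<sigma> = -1"
    and side: "\<And>t. \<sigma> * (t - w / measure Q B) < 0 \<Longrightarrow> f t = \<infinity>"
  shows "\<exists>c a. f (w / measure Q B) = ereal c \<and> (AE x in Q. x \<in> B \<longrightarrow> ereal (c + a * (h x - w / measure Q B)) \<le> f (h x))"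
proof -
  interpret prob_space Q by fact
  define t0 where "t0 = w / measure Q B"
  define N where "N = {x \<in> space Q. x \<in> B \<and> \<sigma> * (h x - t0) < 0}"
  have Nm: "N \<in> sets Q" unfolding N_def using B hm by measurable
  have "emeasure Q N = 0"
    by (rule null_of_inf[OF fin Nm]) (auto simp: N_def t0_def side)
  then have ae1: "AE x in Q. x \<in> B \<longrightarrow> 0 \<le> \<sigma> * (h x - t0)"
    by (subst AE_iff_measurable[OF Nm]) (auto simp: N_def)
  define g where "g x = \<sigma> * (h x * indicator B x) - (\<sigma> * t0) * indicator B x" for x
  have i1: "integrable Q (\<lambda>x. h x * indicator B x)" using B hi by (rule integrable_real_mult_indicator)
  have i2: "integrable Q (indicator B :: _ \<Rightarrow> real)" using B by (intro integrable_real_indicator) (auto simp: less_top[symmetric])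
  have gi: "integrable Q g" unfolding g_def
    by (intro Bochner_Integration.integrable_diff integrable_mult_right i1 i2)
  have "integral\<^sup>L Q g = \<sigma> * w - \<sigma> * t0 * measure Q B"
    unfolding g_def
    apply (subst Bochner_Integration.integral_diff)
      apply (rule integrable_mult_right[OF i1])
     apply (rule integrable_mult_right[OF i2])
    apply (subst integral_mult_right_zero)
    apply (subst integral_mult_right_zero)
    using w B by (simp add: Int_absorb2 sets.sets_into_space)
  also have "\<dots> = 0" unfolding t0_def using b by simp
  finally have "integral\<^sup>L Q g = 0" .
  moreover have "AE x in Q. 0 \<le> g x" using ae1
    by (rule eventually_mono) (auto simp: g_def indicator_def algebra_simps)
  ultimately have "AE x in Q. g x = 0" using integral_nonneg_eq_0_iff_AE[OF gi] by simp
  then have ae2: "AE x in Q. x \<in> B \<longrightarrow> h x = t0"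
    by (rule eventually_mono) (use \<sigma> in \<open>auto simp: g_def indicator_def algebra_simps\<close>)
  have ft0: "f t0 \<noteq> \<infinity>"
  proof
    assume inf: "f t0 = \<infinity>"
    define N' where "N' = {x \<in> space Q. x \<in> B \<and> h x = t0}"
    have N'm: "N' \<in> sets Q" unfolding N'_def using B hm by measurable
    have "emeasure Q N' = 0"
      by (rule null_of_inf[OF fin N'm]) (auto simp: N'_def inf)
    then have "N' \<in> null_sets Q" using N'm by (simp add: null_sets_def)
    then have "AE x in Q. x \<notin> N'" by (rule AE_not_in)
    with ae2 AE_space have "AE x in Q. x \<notin> B" by eventually_elim (auto simp: N'_def)
    moreover have "{x \<in> space Q. \<not> x \<notin> B} = B" using sets.sets_into_space[OF B] by auto
    ultimately have "emeasure Q B = 0"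
      using AE_iff_measurable[OF B, of "\<lambda>x. x \<notin> B"] by simp
    then show False using b by (simp add: emeasure_eq_measure)
  qed
  then obtain c where c: "f t0 = ereal c" using cce_not_minf[OF cce, of t0] by (cases "f t0") auto
  have "AE x in Q. x \<in> B \<longrightarrow> ereal (c + 0 * (h x - t0)) \<le> f (h x)"
    using ae2 by (rule eventually_mono) (auto simp: c)
  then show ?thesis using c unfolding t0_def by blast
qed

lemma minorant:
  assumes cce: "closed_convex_ext f" and Q: "prob_space Q" and B: "B \<in> sets Q"
    and b: "measure Q B > 0" and hm: "h \<in> borel_measurable Q" and hi: "integrable Q h"
    and w: "(\<integral>x. h x * indicator B x \<partial>Q) = w"
    and fin: "(\<integral>\<^sup>+x. e2ennreal (f (h x)) \<partial>Q) < \<infinity>"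
  shows "\<exists>c a. f (w / measure Q B) = ereal c \<and> (AE x in Q. x \<in> B \<longrightarrow> ereal (c + a * (h x - w / measure Q B)) \<le> f (h x))"
proof -
  define t0 where "t0 = w / measure Q B"
  have "(\<exists>t1 t2. t1 < t0 \<and> t0 < t2 \<and> f t1 \<noteq> \<infinity> \<and> f t2 \<noteq> \<infinity>)
    \<or> (\<forall>t. t < t0 \<longrightarrow> f t = \<infinity>) \<or> (\<forall>t. t0 < t \<longrightarrow> f t = \<infinity>)"
    by blast
  then consider "\<exists>t1 t2. t1 < t0 \<and> t0 < t2 \<and> f t1 \<noteq> \<infinity> \<and> f t2 \<noteq> \<infinity>"
    | "\<And>t. 1 * (t - t0) < 0 \<Longrightarrow> f t = \<infinity>" | "\<And>t. (-1) * (t - t0) < 0 \<Longrightarrow> f t = \<infinity>"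
  proof (elim disjE)
    assume a2: "\<forall>t. t < t0 \<longrightarrow> f t = \<infinity>"
    show thesis by (rule that(2)) (use a2 in simp)
  next
    assume a3: "\<forall>t. t0 < t \<longrightarrow> f t = \<infinity>"
    show thesis by (rule that(3)) (use a3 in simp)
  qed (use that in blast)
  then show ?thesis
  proof cases
    case 1
    then obtain t1 t2 where "t1 < t0" "t0 < t2" "f t1 \<noteq> \<infinity>" "f t2 \<noteq> \<infinity>" by blast
    from subgradient[OF cce this] obtain c a where "f t0 = ereal c" "\<forall>t. ereal (c + a * (t - t0)) \<le> f t"
      by blast
    then show ?thesis unfolding t0_def by auto
  next
    case 2
    show ?thesis by (rule degenerate_case[OF cce Q B b hm hi w fin, of 1]) (use 2 in \<open>simp_all add: t0_def\<close>)
  next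
    case 3
    show ?thesis by (rule degenerate_case[OF cce Q B b hm hi w fin, of "-1"]) (use 3 in \<open>simp_all add: t0_def\<close>)
  qed
qed




lemma dpi:
  assumes cce: "closed_convex_ext f" and Q: "prob_space Q" and P: "prob_space P"
    and sPQ: "sets P = sets Q" and ac: "absolutely_continuous Q P"
    and fd: "fdiv f P Q \<le> ereal \<rho>" and A: "A \<in> sets Q"
    and b0: "0 < measure Q A" and b1: "measure Q A < 1"
  shows "phi f (measure Q A) (measure P A) \<le> fdiv f P Q"
proof -
  interpret Q: prob_space Q by fact
  interpret P: prob_space P by fact
  define h where "h x = enn2real (RN_deriv Q P x)" for x
  have hm: "h \<in> borel_measurable Q" unfolding h_def by measurable
  have fin_RN: "AE x in Q. RN_deriv Q P x \<noteq> \<infinity>"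
    by (rule Q.RN_deriv_finite[OF P.sigma_finite_measure_axioms ac sPQ])
  have dens: "density Q (RN_deriv Q P) = P" by (rule Q.density_RN_deriv[OF ac sPQ])
  have spPQ: "space P = space Q" using sPQ by (rule sets_eq_imp_space_eq)
  have emP: "emeasure P B = (\<integral>\<^sup>+x. ennreal (h x * indicator B x) \<partial>Q)" if B: "B \<in> sets Q" for B
  proof -
    have "emeasure P B = (\<integral>\<^sup>+x. RN_deriv Q P x * indicator B x \<partial>Q)"
      using B by (subst dens[symmetric]) (simp add: emeasure_density)
    also have "\<dots> = (\<integral>\<^sup>+x. ennreal (h x * indicator B x) \<partial>Q)"
      by (rule nn_integral_cong_AE) (use fin_RN in \<open>auto elim!: eventually_mono simp: h_def indicator_def ennreal_enn2real_if\<close>)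
    finally show ?thesis .
  qed
  have hnn: "\<And>x. 0 \<le> h x" unfolding h_def by simp
  have hi: "integrable Q h"
  proof (rule integrableI_nonneg[OF hm])
    show "AE x in Q. 0 \<le> h x" using hnn by simp
    have "(\<integral>\<^sup>+x. ennreal (h x) \<partial>Q) = emeasure P (space Q)"
      using emP[of "space Q"] by (simp add: indicator_def cong: nn_integral_cong)
    then show "(\<integral>\<^sup>+x. ennreal (h x) \<partial>Q) < \<infinity>" using spPQ P.emeasure_space_1 by simp
  qed
  have mP: "(\<integral>x. h x * indicator B x \<partial>Q) = measure P B" if B: "B \<in> sets Q" for B
  proof -
    have i: "integrable Q (\<lambda>x. h x * indicator B x)" using B hi by (rule integrable_real_mult_indicator)
    have "ennreal (\<integral>x. h x * indicator B x \<partial>Q) = (\<integral>\<^sup>+x. ennreal (h x * indicator B x) \<partial>Q)"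
      by (rule nn_integral_eq_integral[OF i, symmetric]) (simp add: hnn)
    also have "\<dots> = emeasure P B" using emP[OF B] by simp
    also have "\<dots> = ennreal (measure P B)" by (simp add: P.emeasure_eq_measure)
    finally show ?thesis
      by (subst (asm) ennreal_inj) (auto intro!: integral_nonneg_AE simp: hnn)
  qed
  define Kp where "Kp = (\<integral>\<^sup>+x. e2ennreal (f (h x)) \<partial>Q)"
  define Kn where "Kn = (\<integral>\<^sup>+x. e2ennreal (- f (h x)) \<partial>Q)"
  have fdK: "fdiv f P Q = enn2ereal Kp - enn2ereal Kn" unfolding fdiv_def Kp_def Kn_def h_def ..
  have fin: "Kp < \<infinity>"
  proof (rule ccontr)
    assume "\<not> Kp < \<infinity>"
    then have "Kp = \<infinity>" by (simp add: less_top[symmetric])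
    then have "fdiv f P Q = \<infinity>" unfolding fdK by (cases "enn2ereal Kn") auto
    then show False using fd by simp
  qed
  define \<beta> where "\<beta> = measure Q A"
  define z where "z = measure P A"
  define A' where "A' = space Q - A"
  have A': "A' \<in> sets Q" unfolding A'_def using A by auto
  have mA': "measure Q A' = 1 - \<beta>" unfolding A'_def \<beta>_def using A by (simp add: Q.prob_compl)
  have mPA': "measure P A' = 1 - z" unfolding A'_def z_def
    using P.prob_compl[of A] A sPQ spPQ by simp
  obtain c1 a1 where c1: "f (z / \<beta>) = ereal c1"
    and ae1: "AE x in Q. x \<in> A \<longrightarrow> ereal (c1 + a1 * (h x - z / \<beta>)) \<le> f (h x)"
    using minorant[OF cce Q A b0 hm hi mP[OF A] fin[unfolded Kp_def]] unfolding z_def[symmetric] \<beta>_def[symmetric]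
    by (elim exE conjE) (erule that, assumption)
  have b0': "0 < measure Q A'" using mA' b1 \<beta>_def by simp
  obtain c2 a2 where c2: "f ((1 - z) / (1 - \<beta>)) = ereal c2"
    and ae2: "AE x in Q. x \<in> A' \<longrightarrow> ereal (c2 + a2 * (h x - (1 - z) / (1 - \<beta>))) \<le> f (h x)"
    using minorant[OF cce Q A' b0' hm hi mP[OF A'] fin[unfolded Kp_def]] unfolding mA' mPA'
    by (elim exE conjE) (erule that, assumption)
  define t1 where "t1 = z / \<beta>"
  define t2 where "t2 = (1 - z) / (1 - \<beta>)"
  define l where "l x = (c1 - a1 * t1) * indicator A x + a1 * (h x * indicator A x)
     + ((c2 - a2 * t2) * indicator A' x + a2 * (h x * indicator A' x))" for x
  have iA: "integrable Q (indicator A :: _ \<Rightarrow> real)" using A by (intro integrable_real_indicator) (auto simp: less_top[symmetric])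
  have iA': "integrable Q (indicator A' :: _ \<Rightarrow> real)" using A' by (intro integrable_real_indicator) (auto simp: less_top[symmetric])
  have ihA: "integrable Q (\<lambda>x. h x * indicator A x)" using A hi by (rule integrable_real_mult_indicator)
  have ihA': "integrable Q (\<lambda>x. h x * indicator A' x)" using A' hi by (rule integrable_real_mult_indicator)
  have hbA: "has_bochner_integral Q (indicator A) \<beta>"
    unfolding has_bochner_integral_iff using iA A sets.sets_into_space[OF A] by (simp add: \<beta>_def Int_absorb2)
  have hbA': "has_bochner_integral Q (indicator A') (1 - \<beta>)"
    unfolding has_bochner_integral_iff using iA' A' sets.sets_into_space[OF A'] mA' by (simp add: Int_absorb2)
  have hbhA: "has_bochner_integral Q (\<lambda>x. h x * indicator A x) z"
    unfolding has_bochner_integral_iff using ihA mP[OF A] by (simp add: z_def)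
  have hbhA': "has_bochner_integral Q (\<lambda>x. h x * indicator A' x) (1 - z)"
    unfolding has_bochner_integral_iff using ihA' mP[OF A'] mPA' by simp
  have hbl: "has_bochner_integral Q l (((c1 - a1 * t1) * \<beta> + a1 * z) + ((c2 - a2 * t2) * (1 - \<beta>) + a2 * (1 - z)))"
    unfolding l_def
    by (intro has_bochner_integral_add has_bochner_integral_mult_right hbA hbA' hbhA hbhA')
  have li: "integrable Q l" using hbl by (simp add: has_bochner_integral_iff)
  have "integral\<^sup>L Q l = ((c1 - a1 * t1) * \<beta> + a1 * z) + ((c2 - a2 * t2) * (1 - \<beta>) + a2 * (1 - z))"
    using hbl by (simp add: has_bochner_integral_iff)
  also have "\<dots> = \<beta> * c1 + (1 - \<beta>) * c2"
    unfolding t1_def t2_def using b0 b1 by (simp add: \<beta>_def field_simps)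
  finally have il: "integral\<^sup>L Q l = \<beta> * c1 + (1 - \<beta>) * c2" .
  have "AE x in Q. ereal (l x) \<le> f (h x)"
    using ae1 ae2 AE_space
  proof (eventually_elim)
    case (elim x)
    show ?case
    proof (cases "x \<in> A")
      case True
      then have "x \<notin> A'" unfolding A'_def by simp
      then show ?thesis using True elim(1) unfolding l_def t1_def by (simp add: algebra_simps)
    next
      case False
      then have "x \<in> A'" unfolding A'_def using elim(3) by simp
      then show ?thesis using False elim(2) unfolding l_def t2_def by (simp add: algebra_simps)
    qed
  qed
  from lower_bound_int[OF li this]
  have "ereal (\<beta> * c1 + (1 - \<beta>) * c2) \<le> fdiv f P Q" unfolding il fdK Kp_def Kn_def .
  moreover have "phi f \<beta> z = ereal (\<beta> * c1 + (1 - \<beta>) * c2)"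
    unfolding phi_def c1 c2 by simp
  ultimately show ?thesis unfolding \<beta>_def z_def by simp
qed




lemma ennreal_pos_part: "ennreal u * ennreal b = ennreal (max u 0 * b)" if "0 \<le> b" for u b :: real
  using that by (cases "u \<ge> 0") (auto simp: ennreal_mult'' ennreal_neg)

lemma construct:
  assumes cce: "closed_convex_ext f" and f1: "f 1 = 0" and Q: "prob_space Q" and A: "A \<in> sets Q"
    and b: "measure Q A = b" "0 \<le> b" "b < 1" and z: "0 \<le> z" "z \<le> 1" and r: "0 \<le> \<rho>"
    and cs: "(b = 0 \<and> z = 0) \<or> (0 < b \<and> phi f b z \<le> ereal \<rho>)"
  shows "\<exists>P. prob_space P \<and> sets P = sets Q \<and> absolutely_continuous Q P \<and> fdiv f P Q \<le> ereal \<rho> \<and> measure P A = z"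
proof -
  interpret Q: prob_space Q by fact
  define c1 where "c1 = (if b = 0 then 0 else z / b)"
  define c2 where "c2 = (1 - z) / (1 - b)"
  define A' where "A' = space Q - A"
  have A': "A' \<in> sets Q" unfolding A'_def using A by auto
  have c: "0 \<le> c1" "0 \<le> c2" unfolding c1_def c2_def using b z by auto
  have c1b: "c1 * b = z" unfolding c1_def using cs by auto
  have c2b: "c2 * (1 - b) = 1 - z" unfolding c2_def using b by auto
  have eA: "emeasure Q A = ennreal b" using b Q.emeasure_eq_measure by simp
  have eA': "emeasure Q A' = ennreal (1 - b)" unfolding A'_def using A b
    by (simp add: Q.emeasure_eq_measure Q.prob_compl)
  define hh where "hh x = c1 * indicator A x + c2 * indicator A' x" for x
  have hhm: "hh \<in> borel_measurable Q" unfolding hh_def using A A' by measurable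
  have hh_cases: "x \<in> space Q \<Longrightarrow> hh x = (if x \<in> A then c1 else c2)" for x
    unfolding hh_def A'_def by (auto simp: indicator_def)
  have hnn: "0 \<le> hh x" for x unfolding hh_def using c by auto
  have two: "(\<integral>\<^sup>+x. G (hh x) \<partial>Q) = G c1 * emeasure Q A + G c2 * emeasure Q A'" for G :: "real \<Rightarrow> ennreal"
  proof -
    have "(\<integral>\<^sup>+x. G (hh x) \<partial>Q) = (\<integral>\<^sup>+x. G c1 * indicator A x + G c2 * indicator A' x \<partial>Q)"
      by (rule nn_integral_cong) (auto simp: hh_cases A'_def indicator_def)
    also have "\<dots> = G c1 * emeasure Q A + G c2 * emeasure Q A'"
      using A A' by (simp add: nn_integral_add nn_integral_cmult_indicator)
    finally show ?thesis .
  qed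
  define P where "P = density Q (\<lambda>x. ennreal (hh x))"
  have sP: "sets P = sets Q" unfolding P_def by simp
  have spP: "space P = space Q" unfolding P_def by simp
  have emP: "emeasure P B = (\<integral>\<^sup>+x. ennreal (hh x) * indicator B x \<partial>Q)" if "B \<in> sets Q" for B
    unfolding P_def using that hhm by (simp add: emeasure_density)
  have "emeasure P (space P) = ennreal c1 * ennreal b + ennreal c2 * ennreal (1 - b)"
    using emP[OF sets.top[of Q]] two[of "\<lambda>t. ennreal t"] spP eA eA'
    by (simp add: indicator_def cong: nn_integral_cong)
  also have "\<dots> = ennreal (c1 * b + c2 * (1 - b))"
    using c b by (simp add: ennreal_mult'' ennreal_plus[symmetric])
  also have "\<dots> = 1" using c1b c2b by simp
  finally have Pprob: "prob_space P" by (rule prob_spaceI)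
  have "emeasure P A = (\<integral>\<^sup>+x. ennreal c1 * indicator A x \<partial>Q)"
    unfolding emP[OF A] by (rule nn_integral_cong) (auto simp: hh_cases indicator_def)
  also have "\<dots> = ennreal c1 * ennreal b" using A eA by (simp add: nn_integral_cmult_indicator)
  also have "\<dots> = ennreal z" using c c1b b by (simp add: ennreal_mult[symmetric])
  finally have mPA: "measure P A = z"
    using z by (simp add: measure_def)
  have ac: "absolutely_continuous Q P" unfolding P_def using hhm by (intro absolutely_continuousI_density) measurable
  have RN: "AE x in Q. ennreal (hh x) = RN_deriv Q P x"
    unfolding P_def by (rule Q.RN_deriv_unique) (use hhm in measurable)
  have hRN: "AE x in Q. enn2real (RN_deriv Q P x) = hh x"
    using RN
  proof (rule eventually_mono)
    fix x assume e: "ennreal (hh x) = RN_deriv Q P x"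
    show "enn2real (RN_deriv Q P x) = hh x" unfolding e[symmetric] using hnn[of x] by simp
  qed
  have fdE: "fdiv f P Q = enn2ereal (\<integral>\<^sup>+x. e2ennreal (f (hh x)) \<partial>Q) - enn2ereal (\<integral>\<^sup>+x. e2ennreal (- f (hh x)) \<partial>Q)"
  proof -
    have 1: "(\<integral>\<^sup>+x. e2ennreal (f (enn2real (RN_deriv Q P x))) \<partial>Q) = (\<integral>\<^sup>+x. e2ennreal (f (hh x)) \<partial>Q)"
      by (rule nn_integral_cong_AE) (use hRN in \<open>auto elim!: eventually_mono\<close>)
    have 2: "(\<integral>\<^sup>+x. e2ennreal (- f (enn2real (RN_deriv Q P x))) \<partial>Q) = (\<integral>\<^sup>+x. e2ennreal (- f (hh x)) \<partial>Q)"
      by (rule nn_integral_cong_AE) (use hRN in \<open>auto elim!: eventually_mono\<close>)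
    show ?thesis unfolding fdiv_def 1 2 ..
  qed
  have pos2: "(\<integral>\<^sup>+x. e2ennreal (f (hh x)) \<partial>Q) = e2ennreal (f c1) * ennreal b + e2ennreal (f c2) * ennreal (1 - b)"
    using two[of "\<lambda>t. e2ennreal (f t)"] unfolding eA eA' by simp
  have neg2: "(\<integral>\<^sup>+x. e2ennreal (- f (hh x)) \<partial>Q) = e2ennreal (- f c1) * ennreal b + e2ennreal (- f c2) * ennreal (1 - b)"
    using two[of "\<lambda>t. e2ennreal (- f t)"] unfolding eA eA' by simp
  have fd: "fdiv f P Q \<le> ereal \<rho>"
  proof (cases "b = 0")
    case True
    then have "z = 0" using cs by auto
    then have c21: "c2 = 1" unfolding c2_def using True by simp
    have "f c2 = 0" unfolding c21 by (rule f1)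
    then have "(\<integral>\<^sup>+x. e2ennreal (f (hh x)) \<partial>Q) = 0" "(\<integral>\<^sup>+x. e2ennreal (- f (hh x)) \<partial>Q) = 0"
      unfolding pos2 neg2 using True by simp_all
    then have "fdiv f P Q = 0" unfolding fdE by simp
    then show ?thesis using r by (simp add: zero_ereal_def)
  next
    case False
    then have bp: "0 < b" and ph: "phi f b z \<le> ereal \<rho>" using cs b by auto
    from phi_fin[OF cce ph bp b(3)] obtain u v where uv: "f (z / b) = ereal u" "f ((1 - z) / (1 - b)) = ereal v"
      and le: "b * u + (1 - b) * v \<le> \<rho>" .
    have fc: "f c1 = ereal u" "f c2 = ereal v" using uv False unfolding c1_def c2_def by auto
    have b1: "0 \<le> 1 - b" using b by simp
    have nn: "0 \<le> max u 0 * b" "0 \<le> max v 0 * (1 - b)" "0 \<le> max (- u) 0 * b" "0 \<le> max (- v) 0 * (1 - b)"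
      using b b1 by auto
    have p: "(\<integral>\<^sup>+x. e2ennreal (f (hh x)) \<partial>Q) = ennreal (max u 0 * b + max v 0 * (1 - b))"
      unfolding pos2 fc e2ennreal_ereal ennreal_pos_part[OF b(2)] ennreal_pos_part[OF b1]
      using nn by (simp add: ennreal_plus)
    have n: "(\<integral>\<^sup>+x. e2ennreal (- f (hh x)) \<partial>Q) = ennreal (max (- u) 0 * b + max (- v) 0 * (1 - b))"
      unfolding neg2 fc uminus_ereal.simps e2ennreal_ereal ennreal_pos_part[OF b(2)] ennreal_pos_part[OF b1]
      using nn by (simp add: ennreal_plus)
    have "fdiv f P Q = ereal (max u 0 * b + max v 0 * (1 - b)) - ereal (max (- u) 0 * b + max (- v) 0 * (1 - b))"
      unfolding fdE p n
      by (subst (1 2) enn2ereal_ennreal) (use nn in simp_all)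
    also have "\<dots> = ereal (b * u + (1 - b) * v)"
    proof -
      have "max u 0 - max (- u) 0 = u" "max v 0 - max (- v) 0 = v" by auto
      then have "max u 0 * b + max v 0 * (1 - b) - (max (- u) 0 * b + max (- v) 0 * (1 - b)) = b * u + (1 - b) * v"
        by (metis (no_types, lifting) add_diff_add left_diff_distrib mult.commute)
      then show ?thesis by simp
    qed
    finally show ?thesis using le by simp
  qed
  show ?thesis using Pprob sP ac fd mPA by (intro exI[of _ P]) simp
qed




lemma mixture_prob:
  assumes sP: "\<And>i. i < d \<Longrightarrow> sets (P i) = sets borel" and pP: "\<And>i. i < d \<Longrightarrow> prob_space (P i)"
    and lam: "\<forall>i<d. 0 \<le> lam i" "(\<Sum>i<d. lam i) = 1"
  shows "prob_space (mixture d lam P)" "sets (mixture d lam P) = sets borel"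
    "\<And>A. A \<in> sets borel \<Longrightarrow> measure (mixture d lam P) A = (\<Sum>i<d. lam i * measure (P i) A)"
proof -
  have mf1: "sets (mixture d lam P) = sets borel" by (rule mixture_facts(1)) (rule sP)
  have mf2: "space (mixture d lam P) = UNIV" by (rule mixture_facts(2)) (rule sP)
  have mf3: "emeasure (mixture d lam P) A = (\<Sum>i<d. ennreal (lam i) * emeasure (P i) A)"
    if "A \<in> sets borel" for A by (rule mixture_facts(3)) (rule sP, assumption, rule that)
  have em: "emeasure (mixture d lam P) A = ennreal (\<Sum>i<d. lam i * measure (P i) A)" if A: "A \<in> sets borel" for A
  proof -
    have "emeasure (mixture d lam P) A = (\<Sum>i<d. ennreal (lam i) * emeasure (P i) A)" using mf3[OF A] .
    also have "\<dots> = (\<Sum>i<d. ennreal (lam i * measure (P i) A))"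
    proof (rule sum.cong[OF refl])
      fix i assume "i \<in> {..<d}"
      then have "i < d" by simp
      then interpret Pi: prob_space "P i" by (rule pP)
      show "ennreal (lam i) * emeasure (P i) A = ennreal (lam i * measure (P i) A)"
        using lam(1) \<open>i < d\<close> Pi.emeasure_eq_measure[of A]
        by (simp add: ennreal_mult)
    qed
    also have "\<dots> = ennreal (\<Sum>i<d. lam i * measure (P i) A)"
      by (rule sum_ennreal) (use lam(1) in auto)
    finally show ?thesis .
  qed
  show "sets (mixture d lam P) = sets borel" by (rule mf1)
  have "emeasure (mixture d lam P) (space (mixture d lam P)) = 1"
  proof -
    have "(\<Sum>i<d. lam i * measure (P i) UNIV) = (\<Sum>i<d. lam i)"
    proof (rule sum.cong[OF refl])
      fix i assume "i \<in> {..<d}"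
      then have "i < d" by simp
      then have "measure (P i) UNIV = 1" using pP[of i] sP[of i] prob_space.prob_space[of "P i"]
        sets_eq_imp_space_eq[of "P i" borel] by simp
      then show "lam i * measure (P i) UNIV = lam i" by simp
    qed
    then show ?thesis using em[of UNIV] mf2 lam(2) by simp
  qed
  then show "prob_space (mixture d lam P)" by (rule prob_spaceI)
  fix A :: "real set" assume A: "A \<in> sets borel"
  show "measure (mixture d lam P) A = (\<Sum>i<d. lam i * measure (P i) A)"
    unfolding measure_def em[OF A]
    by (rule enn2real_ennreal) (use lam(1) in \<open>auto intro!: sum_nonneg\<close>)
qed




theorem theorem6:
  fixes M :: "('x \<times> 'y) measure" and s :: "'x \<times> 'y \<Rightarrow> real"
    and S :: "nat \<Rightarrow> ('x \<times> 'y) measure" and d :: nat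
    and f :: "real \<Rightarrow> ereal" and \<rho> :: real and \<alpha> :: real
  assumes "s \<in> borel_measurable M"
    and "d \<ge> 1"
    and "\<And>i. i < d \<Longrightarrow> prob_space (S i)"
    and "\<And>i. i < d \<Longrightarrow> sets (S i) = sets M"
    and "closed_convex_ext f" and "f 1 = 0" and "\<And>t. t < 0 \<Longrightarrow> f t = \<infinity>"
    and "\<rho> > 0"
    and "0 < \<alpha>" and "\<alpha> < 1"
  shows "(SUP P \<in> P_ball f \<rho> d (\<lambda>i. distr (S i) borel s). quantile P \<alpha>)
       = quantile_cdf (\<lambda>x. Min ((\<lambda>i. measure (distr (S i) borel s) {..x}) ` {..<d}))
           (g_inv f \<rho> \<alpha>)"
proof -
  note sm = assms(1) and d1 = assms(2) and pS = assms(3) and sS = assms(4)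
    and cce = assms(5) and f1 = assms(6) and r = assms(8) and a = assms(9,10)
  have r0: "0 \<le> \<rho>" using r by simp
  define Pm where "Pm = (\<lambda>i. distr (S i) borel s)"
  have sPm: "sets (Pm i) = sets borel" for i unfolding Pm_def by simp
  have pPm: "prob_space (Pm i)" if "i < d" for i
  proof -
    have "s \<in> measurable (S i) borel" unfolding measurable_cong_sets[OF sS[OF that] refl, of borel] by (rule sm)
    then show ?thesis unfolding Pm_def by (rule prob_space.prob_space_distr[OF pS[OF that]])
  qed
  define F where "F i x = measure (Pm i) {..x}" for i x
  define Fmin where "Fmin x = Min ((\<lambda>i. F i x) ` {..<d})" for x
  define \<gamma> where "\<gamma> = g_inv f \<rho> \<alpha>"
  note gi = g_inv_facts[of f \<alpha> \<rho>, OF f1 a r0]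
  have fin_ne: "finite ((\<lambda>i. F i x) ` {..<d})" "(\<lambda>i. F i x) ` {..<d} \<noteq> {}" for x
  proof -
    have "0 \<in> {..<d}" using d1 by simp
    then show "finite ((\<lambda>i. F i x) ` {..<d})" "(\<lambda>i. F i x) ` {..<d} \<noteq> {}" by auto
  qed
  have Fmin_le: "Fmin x \<le> F i x" if "i < d" for i x
    unfolding Fmin_def using fin_ne[of x] that by (intro Min_le) auto
  have goal_eq: "?thesis \<longleftrightarrow> (SUP P \<in> P_ball f \<rho> d Pm. quantile P \<alpha>) = quantile_cdf Fmin \<gamma>"
    unfolding Pm_def F_def Fmin_def \<gamma>_def by (simp only:)
  have le: "(SUP P \<in> P_ball f \<rho> d Pm. quantile P \<alpha>) \<le> quantile_cdf Fmin \<gamma>"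
  proof (rule SUP_least)
    fix P assume P: "P \<in> P_ball f \<rho> d Pm"
    then obtain S0 where Pp: "prob_space P" "sets P = sets borel" and S0: "S0 \<in> conv_hull_meas d Pm"
      and ac: "absolutely_continuous S0 P" and fd: "fdiv f P S0 \<le> ereal \<rho>"
      unfolding P_ball_def by blast
    obtain lam where S0d: "S0 = mixture d lam Pm" and lam: "\<forall>i<d. 0 \<le> lam i" "(\<Sum>i<d. lam i) = 1"
      using S0 unfolding conv_hull_meas_def by blast
    note mp = mixture_prob[of d Pm lam, OF sPm pPm lam]
    have Qp: "prob_space S0" and sQ: "sets S0 = sets borel" using mp S0d by auto
    interpret Q: prob_space S0 by fact
    interpret PP: prob_space P by fact
    have key: "\<alpha> \<le> measure P {..q}" if q: "\<gamma> \<le> Fmin q" for q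
    proof -
      have Aq: "{..q} \<in> sets S0" using sQ by simp
      define \<beta> where "\<beta> = measure S0 {..q}"
      have "\<beta> = (\<Sum>i<d. lam i * F i q)" unfolding \<beta>_def F_def S0d using mp(3) by simp
      also have "\<dots> \<ge> (\<Sum>i<d. lam i * Fmin q)"
        using lam(1) Fmin_le by (intro sum_mono mult_left_mono) auto
      finally have "Fmin q \<le> \<beta>" using lam(2) by (simp add: sum_distrib_right[symmetric])
      then have bg: "\<gamma> \<le> \<beta>" using q by simp
      then have b0: "0 < \<beta>" using gi(1) a unfolding \<gamma>_def by linarith
      show ?thesis
      proof (cases "\<beta> < 1")
        case True
        have "phi f \<beta> (measure P {..q}) \<le> fdiv f P S0" unfolding \<beta>_def
          by (rule dpi[OF cce Qp Pp(1) _ ac fd Aq]) (use Pp sQ b0 True \<beta>_def in auto)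
        then have ph: "phi f \<beta> (measure P {..q}) \<le> ereal \<rho>" using fd by simp
        show ?thesis
          by (rule key_le[OF cce f1 a r0 _ True _ _ ph]) (use bg \<gamma>_def in auto)
      next
        case False
        then have "\<beta> = 1" using Q.prob_le_1 \<beta>_def by (simp add: not_less antisym)
        then have "measure S0 (space S0 - {..q}) = 0" using Q.prob_compl[OF Aq] \<beta>_def by simp
        then have "space S0 - {..q} \<in> null_sets S0" using Aq
          by (simp add: Q.emeasure_eq_measure null_sets_def)
        then have "space S0 - {..q} \<in> null_sets P" using ac unfolding absolutely_continuous_def by auto
        then have "measure P (space P - {..q}) = 0"
          using sets_eq_imp_space_eq[of P S0] Pp(2) sQ by (simp add: measure_def null_sets_def)
        then have "measure P {..q} = 1" using PP.prob_compl[of "{..q}"] Pp(2) by simp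
        then show ?thesis using a by simp
      qed
    qed
    show "quantile P \<alpha> \<le> quantile_cdf Fmin \<gamma>"
      unfolding quantile_def quantile_cdf_def
      by (rule Inf_superset_mono) (use key in auto)
  qed
  have ge: "quantile_cdf Fmin \<gamma> \<le> (SUP P \<in> P_ball f \<rho> d Pm. quantile P \<alpha>)"
  proof (rule dense_le)
    fix y assume y: "y < quantile_cdf Fmin \<gamma>"
    show "y \<le> (SUP P \<in> P_ball f \<rho> d Pm. quantile P \<alpha>)"
    proof (cases y)
      case MInf then show ?thesis by simp
    next
      case PInf then show ?thesis using y by simp
    next
      case (real q)
      have Fq: "Fmin q < \<gamma>"
      proof (rule ccontr)
        assume "\<not> Fmin q < \<gamma>"
        then have "quantile_cdf Fmin \<gamma> \<le> ereal q" unfolding quantile_cdf_def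
          by (intro Inf_lower) auto
        then show False using y real by simp
      qed
      obtain i where i: "i < d" "Fmin q = F i q"
        using Min_in[OF fin_ne[of q]] unfolding Fmin_def by auto
      define b where "b = F i q"
      have b: "0 \<le> b" "b < \<gamma>" "b < 1" using Fq i gi(2) unfolding b_def F_def \<gamma>_def by auto
      obtain z where z: "0 \<le> z" "z \<le> 1" "z < \<alpha>" "(b = 0 \<and> z = 0) \<or> (0 < b \<and> phi f b z \<le> ereal \<rho>)"
      proof (cases "b = 0")
        case True then show ?thesis using that a by auto
      next
        case False
        then have bp: "0 < b" using b by simp
        from key_ge[OF cce f1 a r0 bp b(2)[unfolded \<gamma>_def]] obtain z where
          "0 \<le> z \<and> z \<le> 1 \<and> z < \<alpha> \<and> phi f b z \<le> ereal \<rho>" by blast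
        then show ?thesis using that bp by blast
      qed
      define lam where "lam j = (if j = i then 1 else 0 :: real)" for j
      have lam: "\<forall>j<d. 0 \<le> lam j" "(\<Sum>j<d. lam j) = 1" unfolding lam_def using i by auto
      define Q where "Q = mixture d lam Pm"
      note mp = mixture_prob[of d Pm lam, OF sPm pPm lam]
      have Qp: "prob_space Q" and sQ: "sets Q = sets borel" using mp Q_def by auto
      have QC: "Q \<in> conv_hull_meas d Pm" unfolding conv_hull_meas_def Q_def using lam by blast
      have mQ: "measure Q {..q} = b"
      proof -
        have "measure Q {..q} = (\<Sum>j<d. lam j * F j q)" unfolding Q_def F_def using mp(3) by simp
        also have "\<dots> = (\<Sum>j\<in>{i}. lam j * F j q)"
          by (rule sum.mono_neutral_right) (use i in \<open>auto simp: lam_def\<close>)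
        finally show ?thesis by (simp add: lam_def b_def)
      qed
      obtain P where P: "prob_space P" "sets P = sets Q" "absolutely_continuous Q P"
        "fdiv f P Q \<le> ereal \<rho>" "measure P {..q} = z"
        using construct[OF cce f1 Qp _ mQ b(1) b(3) z(1,2) r0 z(4)] sQ by auto
      have PB: "P \<in> P_ball f \<rho> d Pm" unfolding P_ball_def using P sQ QC by auto
      interpret PP: prob_space P by fact
      have "ereal q \<le> quantile P \<alpha>"
        unfolding quantile_def quantile_cdf_def
      proof (rule Inf_greatest)
        fix y' assume "y' \<in> ereal ` {q'. \<alpha> \<le> measure P {..q'}}"
        then obtain q' where q': "y' = ereal q'" "\<alpha> \<le> measure P {..q'}" by auto
        have "q \<le> q'"
        proof (rule ccontr)
          assume "\<not> q \<le> q'"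
          then have "{..q'} \<subseteq> {..q}" by auto
          then have "measure P {..q'} \<le> measure P {..q}"
            using P(2) sQ by (intro PP.finite_measure_mono) auto
          then show False using q' P(5) z(3) by simp
        qed
        then show "ereal q \<le> y'" using q' by simp
      qed
      also have "\<dots> \<le> (SUP P \<in> P_ball f \<rho> d Pm. quantile P \<alpha>)" using PB by (rule SUP_upper)
      finally show ?thesis using real by simp
    qed
  qed
  show ?thesis unfolding goal_eq using le ge by (rule antisym)
qed


end
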